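(* For every $n\geq 1$, all vertex degrees in the Fibonacci-sum set-graph $G^F_{A^{(n)}}$ are even.
   Context: Let $\mathcal{F}=\{f_m\}_{m\ge 0}$ be the Fibonacci numbers, $f_0=0$, $f_1=1$, $f_m=f_{m-1}+f_{m-2}$. The Fibonacci-sum set-graph $G^F_{A^{(n)}}$ is the multigraph (loops and multiple edges allowed) whose vertices are in bijection with the nonempty subsets of $A^{(n)}=\{1,\dots,n\}$; between the vertices corresponding to distinct subsets $S,T$ there is one edge for each pair $(i',j')$ with $i'\in S$, $j'\in T$, $i'\neq j'$ and $i'+j'\in\mathcal{F}$, and at the vertex corresponding to $S$ there is one loop for each pair of distinct elements $i',j'\in S$ with $i'+j'\in\mathcal{F}$. The degree of a vertex $v$ is $2l(v)+\sum_{u\neq v}\epsilon(v,u)$, where $l(v)$ is the number of loops at $v$ and $\epsilon(v,u)$ the number of edges between $v$ and $u$. *)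

theory Defs
  imports "HOL-Number_Theory.Fib"
begin

definition is_fib :: "nat \<Rightarrow> bool" where
  "is_fib k \<longleftrightarrow> (\<exists>m. fib m = k)"

definition fsg_vertices :: "nat \<Rightarrow> nat set set" where
  "fsg_vertices n = {S. S \<subseteq> {1..n} \<and> S \<noteq> {}}"

definition fsg_edges :: "nat set \<Rightarrow> nat set \<Rightarrow> nat" where
  "fsg_edges S T = card {(i, j). i \<in> S \<and> j \<in> T \<and> i \<noteq> j \<and> is_fib (i + j)}"

definition fsg_loops :: "nat set \<Rightarrow> nat" where
  "fsg_loops S = card {{i, j} | i j. i \<in> S \<and> j \<in> S \<and> i \<noteq> j \<and> is_fib (i + j)}"

definition fsg_degree :: "nat \<Rightarrow> nat set \<Rightarrow> nat" where
  "fsg_degree n S = 2 * fsg_loops S + (\<Sum>T \<in> fsg_vertices n - {S}. fsg_edges S T)"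

end

theory Submission
  imports Defs
begin

lemma edges_sum:
  assumes "finite T" "finite S"
  shows "fsg_edges S T = (\<Sum>j\<in>T. card {i\<in>S. i \<noteq> j \<and> is_fib (i + j)})"
proof -
  have "{(i, j). i \<in> S \<and> j \<in> T \<and> i \<noteq> j \<and> is_fib (i + j)}
        = (\<lambda>(j,i). (i,j)) ` (SIGMA j:T. {i\<in>S. i \<noteq> j \<and> is_fib (i + j)})"
    by auto
  moreover have "inj_on (\<lambda>(j,i). (i,j)) (SIGMA j:T. {i\<in>S. i \<noteq> j \<and> is_fib (i + j)})"
    by (auto simp: inj_on_def)
  ultimately show ?thesis
    unfolding fsg_edges_def using assms
    by (simp add: card_image card_SigmaI)
qed

lemma card_containing:
  assumes "j \<in> {1..n}"
  shows "card {T \<in> fsg_vertices n. j \<in> T} = 2 ^ (n - 1)"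
proof -
  have "bij_betw (\<lambda>T. T - {j}) {T \<in> fsg_vertices n. j \<in> T} (Pow ({1..n} - {j}))"
    unfolding bij_betw_def
  proof
    show "inj_on (\<lambda>T. T - {j}) {T \<in> fsg_vertices n. j \<in> T}"
      by (auto simp: inj_on_def)
    show "(\<lambda>T. T - {j}) ` {T \<in> fsg_vertices n. j \<in> T} = Pow ({1..n} - {j})"
    proof
      show "(\<lambda>T. T - {j}) ` {T \<in> fsg_vertices n. j \<in> T} \<subseteq> Pow ({1..n} - {j})"
        by (auto simp: fsg_vertices_def)
      show "Pow ({1..n} - {j}) \<subseteq> (\<lambda>T. T - {j}) ` {T \<in> fsg_vertices n. j \<in> T}"
      proof
        fix U assume "U \<in> Pow ({1..n} - {j})"
        then have "insert j U \<in> {T \<in> fsg_vertices n. j \<in> T}" and "U = insert j U - {j}"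
          using assms by (auto simp: fsg_vertices_def)
        then show "U \<in> (\<lambda>T. T - {j}) ` {T \<in> fsg_vertices n. j \<in> T}" by blast
      qed
    qed
  qed
  then have "card {T \<in> fsg_vertices n. j \<in> T} = card (Pow ({1..n} - {j}))"
    by (rule bij_betw_same_card)
  also have "\<dots> = 2 ^ (n - 1)"
    using assms by (simp add: card_Pow)
  finally show ?thesis .
qed

lemma finite_vertices: "finite (fsg_vertices n)"
proof -
  have "fsg_vertices n \<subseteq> Pow {1..n}" by (auto simp: fsg_vertices_def)
  then show ?thesis by (rule finite_subset) simp
qed

lemma self_even: "even (fsg_edges S S)"
proof -
  let ?A = "{(i, j). i \<in> S \<and> j \<in> S \<and> i \<noteq> j \<and> is_fib (i + j)}"
  let ?L = "{(i, j). i \<in> S \<and> j \<in> S \<and> i < j \<and> is_fib (i + j)}"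
  let ?R = "{(i, j). i \<in> S \<and> j \<in> S \<and> j < i \<and> is_fib (i + j)}"
  have split: "?A = ?L \<union> ?R" by (auto simp del: is_fib_def)
  have disj: "?L \<inter> ?R = {}" by auto
  have img: "?R = (\<lambda>(i,j). (j,i)) ` ?L"
  proof
    show "?R \<subseteq> (\<lambda>(i,j). (j,i)) ` ?L"
    proof
      fix p assume "p \<in> ?R"
      then obtain i j where p: "p = (i,j)" "i \<in> S" "j \<in> S" "j < i" "is_fib (i + j)" by blast
      then have "(j,i) \<in> ?L" by (simp add: add.commute)
      then show "p \<in> (\<lambda>(i,j). (j,i)) ` ?L" using p(1) by force
    qed
    show "(\<lambda>(i,j). (j,i)) ` ?L \<subseteq> ?R" by (auto simp: add.commute)
  qed
  have inj: "inj_on (\<lambda>(i,j). (j,i)) ?L" by (auto simp: inj_on_def)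
  have cR: "card ?R = card ?L" using img inj by (simp add: card_image)
  show ?thesis
  proof (cases "finite ?A")
    case True
    have fL: "finite ?L" "finite ?R" using True unfolding split by simp_all
    have "card (?L \<union> ?R) = card ?L + card ?R" by (rule card_Un_disjoint[OF fL disj])
    then have "card ?A = card ?L + card ?R" unfolding split .
    then show ?thesis unfolding fsg_edges_def using cR by simp
  next
    case False
    then show ?thesis unfolding fsg_edges_def by simp
  qed
qed

theorem theorem2p7:
  fixes n :: nat and S :: "nat set"
  assumes "n \<ge> 1" and "S \<in> fsg_vertices n"
  shows "even (fsg_degree n S)"
proof -
  define V where "V = fsg_vertices n"
  define c where "c j = card {i\<in>S. i \<noteq> j \<and> is_fib (i + j)}" for j
  have finV: "finite V" unfolding V_def by (rule finite_vertices)
  have Vsub: "\<And>T. T \<in> V \<Longrightarrow> T \<subseteq> {1..n}" by (auto simp: V_def fsg_vertices_def)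
  have finT: "\<And>T. T \<in> V \<Longrightarrow> finite T" using Vsub finite_subset by blast
  have finS: "finite S" using assms(2) finT V_def by blast
  have main: "even (\<Sum>T\<in>V. fsg_edges S T)"
  proof (cases "n = 1")
    case True
    have "S \<subseteq> {1}" using assms True by (auto simp: fsg_vertices_def)
    have c0: "\<And>j. j \<in> {1..n} \<Longrightarrow> c j = 0"
      proof -
      fix j assume "j \<in> {1..n}"
      then have "{i\<in>S. i \<noteq> j \<and> is_fib (i + j)} = {}" using \<open>S \<subseteq> {1}\<close> True by auto
      then show "c j = 0" unfolding c_def by (metis card.empty)
    qed
    have "(\<Sum>T\<in>V. fsg_edges S T) = (\<Sum>T\<in>V. \<Sum>j\<in>T. c j)"
      using finT finS by (simp add: edges_sum c_def)
    also have "\<dots> = 0"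
      using Vsub c0 by (intro sum.neutral ballI) (meson subsetD)
    finally show ?thesis by simp
  next
    case False
    with assms have n2: "n \<ge> 2" by simp
    have "(\<Sum>T\<in>V. fsg_edges S T) = (\<Sum>T\<in>V. \<Sum>j\<in>T. c j)"
      using finT finS by (simp add: edges_sum c_def)
    also have "\<dots> = (\<Sum>T\<in>V. \<Sum>j\<in>{j\<in>{1..n}. j \<in> T}. c j)"
    proof (rule sum.cong)
      fix T assume "T \<in> V"
      then have "T \<subseteq> {1..n}" by (rule Vsub)
      then have "{j\<in>{1..n}. j \<in> T} = T" by blast
      then show "(\<Sum>j\<in>T. c j) = (\<Sum>j\<in>{j\<in>{1..n}. j \<in> T}. c j)" by simp
    qed simp
    also have "\<dots> = (\<Sum>j\<in>{1..n}. \<Sum>T\<in>{T\<in>V. j \<in> T}. c j)"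
      by (rule sum.swap_restrict) (simp_all add: finV)
    also have "\<dots> = (\<Sum>j\<in>{1..n}. 2 ^ (n - 1) * c j)"
      by (rule sum.cong) (simp_all add: card_containing V_def)
    finally have eq: "(\<Sum>T\<in>V. fsg_edges S T) = (\<Sum>j\<in>{1..n}. 2 ^ (n - 1) * c j)" .
    have "even ((2::nat) ^ (n - 1))" using n2 by simp
    then have "\<And>j. even ((2::nat) ^ (n - 1) * c j)" by simp
    then have "even (\<Sum>j\<in>{1..n}. 2 ^ (n - 1) * c j)" by (intro dvd_sum) simp
    then show ?thesis using eq by simp
  qed
  have SV: "S \<in> V" using assms V_def by simp
  have "(\<Sum>T\<in>V. fsg_edges S T) = fsg_edges S S + (\<Sum>T\<in>V - {S}. fsg_edges S T)"
    using finV SV by (rule sum.remove)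
  with main self_even have "even (\<Sum>T\<in>V - {S}. fsg_edges S T)"
    by (metis dvd_add_right_iff)
  then show ?thesis unfolding fsg_degree_def V_def by simp
qed

end
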